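(* Let $A$ be an infinite countable set, let $\{a_n\}_{n\in A}$ be a family of non-negative numbers such that for some $c>0$ the set $\{n\in A:a_n\leq c\}$ is infinite, and let $\{b_n\}_{n\in\mathbb{Z}_+}$ be a sequence of numbers in $[c,\infty)$ with $b_n\to\infty$ as $n\to\infty$. Then there exists a bijection $\pi:\mathbb{Z}_+\to A$ such that $a_{\pi(n)}\leq b_n$ for each $n\in\mathbb{Z}_+$.
   Context: $\mathbb{Z}_+$ is the set of non-negative integers. *)

theory Defs
  imports "HOL-Analysis.Analysis"
begin

end

theory Submission
  imports Defs
begin

lemma positions:
  fixes b :: "nat \<Rightarrow> real" and h :: "nat \<Rightarrow> real"
  assumes "filterlim b at_top sequentially"
  shows "\<exists>p. (\<forall>j. p (Suc j) \<ge> p j + 2) \<and> (\<forall>j. b (p j) \<ge> h j)"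
proof -
  have ex: "\<exists>m. m \<ge> k \<and> b m \<ge> K" for k K
  proof -
    have "eventually (\<lambda>m. b m \<ge> K) sequentially"
      using assms filterlim_at_top by blast
    then obtain N where "\<forall>m\<ge>N. b m \<ge> K" by (auto simp: eventually_sequentially)
    then show ?thesis by (intro exI[of _ "max k N"]) auto
  qed
  define N where "N k K = (SOME m. m \<ge> k \<and> b m \<ge> K)" for k K
  have N: "N k K \<ge> k \<and> b (N k K) \<ge> K" for k K
    unfolding N_def using someI_ex[OF ex[of k K]] by blast
  define p where "p = rec_nat (N 0 (h 0)) (\<lambda>j pj. N (pj + 2) (h (Suc j)))"
  have "p (Suc j) \<ge> p j + 2" for j using N by (simp add: p_def)
  moreover have "b (p j) \<ge> h j" for j using N by (cases j) (simp_all add: p_def)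
  ultimately show ?thesis by blast
qed

theorem lemma2p2:
  fixes A :: "'a set" and a :: "'a \<Rightarrow> real" and b :: "nat \<Rightarrow> real" and c :: real
  assumes "countable A" and "infinite A"
    and "\<And>n. n \<in> A \<Longrightarrow> a n \<ge> 0"
    and "c > 0"
    and "infinite {n \<in> A. a n \<le> c}"
    and "\<And>n. b n \<ge> c"
    and "filterlim b at_top sequentially"
  shows "\<exists>\<pi>. bij_betw \<pi> (UNIV :: nat set) A \<and> (\<forall>n. a (\<pi> n) \<le> b n)"
proof -
  define S where "S = {n \<in> A. a n \<le> c}"
  have cS: "countable S" using assms(1) unfolding S_def by auto
  have iS: "infinite S" using assms(5) unfolding S_def .
  define f where "f = from_nat_into S"
  have bf: "bij_betw f UNIV S" unfolding f_def using bij_betw_from_nat_into[OF cS iS] .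
  define S' where "S' = f ` {n. even n}"
  define S'' where "S'' = f ` {n. odd n}"
  have infev: "infinite {n::nat. even n}"
    unfolding infinite_nat_iff_unbounded_le
  proof
    fix m :: nat show "\<exists>n\<ge>m. n \<in> {n. even n}" by (intro exI[of _ "2*m"]) auto
  qed
  have infodd: "infinite {n::nat. odd n}"
  proof -
    have "Suc ` {n::nat. even n} \<subseteq> {n. odd n}" by auto
    moreover have "infinite (Suc ` {n::nat. even n})"
      using infev finite_imageD inj_Suc inj_on_subset by blast
    ultimately show ?thesis using finite_subset by blast
  qed
  have injf: "inj f" using bf bij_betw_def by blast
  have iS': "infinite S'" unfolding S'_def using infev finite_imageD[of f] injf inj_on_subset[of f UNIV]
    by blast
  have iS'': "infinite S''" unfolding S''_def using infodd finite_imageD[of f] injf inj_on_subset[of f UNIV]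
    by blast
  have SS: "S = S' \<union> S''" using bf unfolding S'_def S''_def bij_betw_def by auto
  have disj: "S' \<inter> S'' = {}" using injf unfolding S'_def S''_def inj_def by auto
  define U where "U = (A - S) \<union> S'"
  have AU: "A = U \<union> S''" "U \<inter> S'' = {}"
    using SS disj unfolding U_def S_def by auto
  have cU: "countable U" using assms(1) AU by (simp add: countable_Un_iff)
  have iU: "infinite U" unfolding U_def using iS' by auto
  have cS'': "countable S''" using assms(1) AU by (simp add: countable_Un_iff)
  define u where "u = from_nat_into U"
  have bu: "bij_betw u UNIV U" unfolding u_def using bij_betw_from_nat_into[OF cU iU] .
  obtain p where p1: "\<And>j. p (Suc j) \<ge> p j + 2" and p2: "\<And>j. b (p j) \<ge> a (u j)"
    using positions[OF assms(7), of "\<lambda>j. a (u j)"] by blast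
  have sm: "strict_mono p"
  proof (rule strict_monoI_Suc)
    fix n show "p n < p (Suc n)" using p1[of n] by linarith
  qed
  have injp: "inj p" using sm strict_mono_imp_inj_on by blast
  define C where "C = UNIV - range p"
  have notin: "p n + 1 \<notin> range p" for n
  proof
    assume "p n + 1 \<in> range p"
    then obtain m where m: "p m = p n + 1" by auto
    show False
    proof (cases "m \<le> n")
      case True then have "p m \<le> p n" using sm strict_mono_less_eq by blast
      then show False using m by simp
    next
      case False then have "Suc n \<le> m" by simp
      then have "p (Suc n) \<le> p m" using sm strict_mono_less_eq by blast
      then show False using m p1[of n] by simp
    qed
  qed
  have iC: "infinite C"
  proof -
    have "(\<lambda>n. p n + 1) ` UNIV \<subseteq> C" using notin unfolding C_def by auto
    moreover have "inj (\<lambda>n. p n + 1)" using injp by (simp add: inj_def)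
    ultimately show ?thesis
      using finite_imageD[of "\<lambda>n. p n + 1" UNIV] finite_subset infinite_UNIV_nat by blast
  qed
  have bC: "bij_betw (from_nat_into C) UNIV C"
    using bij_betw_from_nat_into[OF _ iC] by simp
  define g where "g = from_nat_into S'' \<circ> inv_into UNIV (from_nat_into C)"
  have bg: "bij_betw g C S''" unfolding g_def
    by (rule bij_betw_trans[OF bij_betw_inv_into[OF bC] bij_betw_from_nat_into[OF cS'' iS'']])
  have bp: "bij_betw (u \<circ> inv p) (range p) U"
    by (rule bij_betw_trans[OF bij_betw_inv_into[OF inj_on_imp_bij_betw[OF injp]] bu])
  define \<pi> where "\<pi> n = (if n \<in> range p then u (inv p n) else g n)" for n
  have b1: "bij_betw \<pi> (range p) U"
    using bp by (rule bij_betw_cong[THEN iffD1, rotated]) (auto simp: \<pi>_def)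
  have b2: "bij_betw \<pi> C S''"
    using bg by (rule bij_betw_cong[THEN iffD1, rotated]) (auto simp: \<pi>_def C_def)
  have "bij_betw \<pi> (range p \<union> C) (U \<union> S'')"
    by (rule bij_betw_combine[OF b1 b2 AU(2)])
  moreover have "range p \<union> C = UNIV" unfolding C_def by auto
  ultimately have bij: "bij_betw \<pi> UNIV A" using AU(1) by simp
  have "a (\<pi> n) \<le> b n" for n
  proof (cases "n \<in> range p")
    case True
    then obtain j where j: "n = p j" by auto
    then have "inv p n = j" using injp by simp
    then show ?thesis using True j p2[of j] by (simp add: \<pi>_def)
  next
    case False
    then have "n \<in> C" unfolding C_def by simp
    then have "\<pi> n \<in> S''" using b2 by (rule bij_betw_apply[rotated])
    then have "\<pi> n \<in> S" using SS by blast
    then have "a (\<pi> n) \<le> c" unfolding S_def by simp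
    then show ?thesis using assms(6)[of n] by linarith
  qed
  then show ?thesis using bij by blast
qed

end
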